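(* Let $A,B\in \mathbb{R}^{m\times n}$ with $m<n$ and let $1\le p\le\infty$. Suppose $A = M_A - N_A$ with $M_A,N_A\in\mathbb{R}^{m\times n}$, $\operatorname{rank}(M_A) = m$, and $\|M_A^\dagger N_A\|_p+ \|M_A^\dagger B\|_p < 1.$ Then for any given $b\in\mathbb{R}^m$, the equation $x = M_A^\dagger\left(N_A x + B|x|+b\right)$ in $x\in\mathbb{R}^n$ has a unique solution, and that solution also satisfies the generalized absolute value equation $Ax-B|x|=b$.
   Context: $M^\dagger$ denotes the Moore–Penrose inverse of $M$. $|x|$ denotes the entrywise absolute value of $x\in\mathbb{R}^n$. $\|\cdot\|_p$ on matrices denotes the operator norm induced by the vector $p$-norm. *)

theory Defs
  imports "HOL-Analysis.Analysis"
begin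

definition vabs :: "real^'n \<Rightarrow> real^'n" where
  "vabs x = (\<chi> i. \<bar>x $ i\<bar>)"

definition vpnorm :: "ereal \<Rightarrow> real^'n \<Rightarrow> real" where
  "vpnorm p x = (if p = \<infinity> then Max (range (\<lambda>i. \<bar>x $ i\<bar>))
                 else (\<Sum>i\<in>UNIV. \<bar>x $ i\<bar> powr real_of_ereal p) powr (1 / real_of_ereal p))"

definition opnorm_p :: "ereal \<Rightarrow> real^'n^'m \<Rightarrow> real" where
  "opnorm_p p M = Sup {vpnorm p (M *v x) / vpnorm p x | x. x \<noteq> 0}"

definition pinv :: "real^'n^'m \<Rightarrow> real^'m^'n" where
  "pinv M = (THE X. M ** X ** M = M \<and> X ** M ** X = X \<and>
                    transpose (M ** X) = M ** X \<and> transpose (X ** M) = X ** M)"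

end

theory Submission imports Defs begin


lemma penrose_unique:
  fixes M :: "real^'n^'m" and X Y :: "real^'m^'n"
  assumes X: "M ** X ** M = M" "X ** M ** X = X" "transpose (M ** X) = M ** X" "transpose (X ** M) = X ** M"
  assumes Y: "M ** Y ** M = M" "Y ** M ** Y = Y" "transpose (M ** Y) = M ** Y" "transpose (Y ** M) = Y ** M"
  shows "X = Y"
proof -
  have "X = X ** (M ** X)" using X(2) by (simp add: matrix_mul_assoc)
  also have "\<dots> = X ** transpose (M ** X)" using X(3) by simp
  also have "\<dots> = X ** transpose X ** transpose M" by (simp add: matrix_transpose_mul matrix_mul_assoc)
  also have "\<dots> = X ** transpose X ** transpose (M ** Y ** M)" using Y(1) by simp
  also have "\<dots> = X ** (transpose (M ** X) ** transpose (M ** Y))" by (simp add: matrix_transpose_mul matrix_mul_assoc)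
  also have "\<dots> = X ** (M ** X) ** (M ** Y)" using X(3) Y(3) by (simp add: matrix_mul_assoc)
  also have "\<dots> = X ** M ** Y" using X(2) by (simp add: matrix_mul_assoc)
  finally have 1: "X = X ** M ** Y" .
  have "Y = (Y ** M) ** Y" using Y(2) by (simp add: matrix_mul_assoc)
  also have "\<dots> = transpose (Y ** M) ** Y" using Y(4) by simp
  also have "\<dots> = transpose M ** transpose Y ** Y" by (simp add: matrix_transpose_mul)
  also have "\<dots> = transpose (M ** X ** M) ** transpose Y ** Y" using X(1) by simp
  also have "\<dots> = (transpose (X ** M) ** transpose (Y ** M)) ** Y" by (simp add: matrix_transpose_mul matrix_mul_assoc)
  also have "\<dots> = (X ** M) ** (Y ** M) ** Y" using X(4) Y(4) by simp
  also have "\<dots> = X ** M ** Y" using Y(2) by (metis matrix_mul_assoc)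
  finally show ?thesis using 1 by simp
qed

lemma pinv_right:
  fixes M :: "real^'n^'m"
  assumes r: "rank M = CARD('m)"
  shows "M ** pinv M = mat 1"
proof -
  let ?S = "M ** transpose M"
  have rt: "rank (transpose M) = CARD('m)" using r by (simp add: rank_transpose)
  have injT: "inj ((*v) (transpose M))" using rt full_rank_injective by blast
  have "\<forall>y. ?S *v y = 0 \<longrightarrow> y = 0"
  proof (intro allI impI)
    fix y assume "?S *v y = 0"
    then have "y \<bullet> (M *v (transpose M *v y)) = 0" by (metis matrix_vector_mul_assoc inner_zero_right)
    then have "(transpose M *v y) \<bullet> (transpose M *v y) = 0"
      by (metis dot_lmul_matrix vector_transpose_matrix transpose_transpose)
    then have "transpose M *v y = transpose M *v 0" by simp
    then show "y = 0" using injT by (meson injD)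
  qed
  then obtain G where G: "G ** ?S = mat 1" using matrix_left_invertible_ker by blast
  then have G2: "?S ** G = mat 1" using matrix_left_right_inverse by blast
  have tS: "transpose ?S = ?S" by (simp add: matrix_transpose_mul)
  have "transpose G ** ?S = mat 1" using G2 tS
    by (metis matrix_transpose_mul transpose_mat)
  then have tG: "transpose G = G"
    by (metis G2 matrix_mul_assoc matrix_mul_lid matrix_mul_rid)
  define X where "X = transpose M ** G"
  have MX: "M ** X = mat 1" unfolding X_def using G2 by (simp add: matrix_mul_assoc)
  have P1: "M ** X ** M = M" using MX by simp
  have P2: "X ** M ** X = X" using MX by (metis matrix_mul_assoc matrix_mul_rid)
  have P3: "transpose (M ** X) = M ** X" using MX by (simp add: transpose_mat)
  have P4: "transpose (X ** M) = X ** M" unfolding X_def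
    by (simp add: matrix_transpose_mul tG matrix_mul_assoc)
  note P = P1 P2 P3 P4
  have "pinv M = X" unfolding pinv_def
    apply (rule the_equality)
    using P apply blast
    using P penrose_unique by blast
  then show ?thesis using MX by simp
qed

lemma powr_cvx:
  fixes u v l m q :: real
  assumes "0 \<le> u" "0 \<le> v" "0 \<le> l" "0 \<le> m" "l + m = 1" "1 \<le> q"
  shows "(l * u + m * v) powr q \<le> l * u powr q + m * v powr q"
proof -
  have lq: "t powr q \<le> t" if "0 \<le> t" "t \<le> 1" for t :: real
    using powr_mono'[of 1 q t] that assms(6) by simp
  consider "u = 0" | "v = 0" | "u > 0 \<and> v > 0" using assms by linarith
  then show ?thesis
  proof cases
    case 1
    have "(l * u + m * v) powr q = m powr q * v powr q" using 1 by (simp add: powr_mult)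
    also have "\<dots> \<le> m * v powr q"
      using lq[of m] assms by (intro mult_right_mono) auto
    finally show ?thesis using 1 assms by simp
  next
    case 2
    have "(l * u + m * v) powr q = l powr q * u powr q" using 2 by (simp add: powr_mult)
    also have "\<dots> \<le> l * u powr q"
      using lq[of l] assms by (intro mult_right_mono) auto
    finally show ?thesis using 2 assms by simp
  next
    case 3
    have "((1 - m) *\<^sub>R u + m *\<^sub>R v) powr q \<le> (1 - m) * u powr q + m * v powr q"
      using convex_onD[OF powr_convex[OF assms(6)], of m u v] 3 assms by auto
    moreover have "l = 1 - m" using assms by simp
    ultimately show ?thesis by simp
  qed
qed

definition pn :: "real \<Rightarrow> real^'n \<Rightarrow> real" where
  "pn q x = (\<Sum>i\<in>UNIV. \<bar>x $ i\<bar> powr q) powr (1 / q)"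

lemma pn_nonneg: "0 \<le> pn q x" by (simp add: pn_def)

lemma pn_comp: assumes "1 \<le> q" shows "\<bar>x $ i\<bar> \<le> pn q x"
proof -
  have "\<bar>x $ i\<bar> powr q \<le> (\<Sum>i\<in>UNIV. \<bar>x $ i\<bar> powr q)"
    by (rule member_le_sum) auto
  then have "(\<bar>x $ i\<bar> powr q) powr (1/q) \<le> pn q x"
    unfolding pn_def using assms by (intro powr_mono2) auto
  moreover have "(\<bar>x $ i\<bar> powr q) powr (1/q) = \<bar>x $ i\<bar>"
    using assms by (simp add: powr_powr)
  ultimately show ?thesis by simp
qed

lemma pn_mono: assumes "1 \<le> q" "\<And>i. \<bar>x $ i\<bar> \<le> \<bar>y $ i\<bar>" shows "pn q x \<le> pn q y"
  unfolding pn_def using assms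
  by (intro powr_mono2 sum_mono sum_nonneg) auto

lemma pn_homog: assumes "1 \<le> q" shows "pn q (c *s x) = \<bar>c\<bar> * pn q x"
proof -
  have "(\<Sum>i\<in>UNIV. \<bar>(c *s x) $ i\<bar> powr q) = \<bar>c\<bar> powr q * (\<Sum>i\<in>UNIV. \<bar>x $ i\<bar> powr q)"
    by (simp add: abs_mult powr_mult sum_distrib_left)
  then show ?thesis unfolding pn_def using assms by (simp add: powr_mult powr_powr)
qed

lemma pn_zero_iff: assumes "1 \<le> q" shows "pn q x = 0 \<longleftrightarrow> x = 0"
proof
  assume "pn q x = 0"
  then have "\<bar>x $ i\<bar> \<le> 0" for i using pn_comp[OF assms, of x i] by simp
  then show "x = 0" by (simp add: vec_eq_iff)
qed (simp add: pn_def)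

lemma pn_triangle: assumes q: "1 \<le> q" shows "pn q (x + y) \<le> pn q x + pn q y"
proof (cases "x = 0 \<or> y = 0")
  case True then show ?thesis by (auto simp: pn_def)
next
  case False
  define s where "s = pn q x"
  define t where "t = pn q y"
  have s: "s > 0" and t: "t > 0" using False pn_zero_iff[OF q] pn_nonneg unfolding s_def t_def
    by (metis less_eq_real_def)+
  define a where "a = (1/s) *s x"
  define b where "b = (1/t) *s y"
  have sum1: "(\<Sum>i\<in>UNIV. \<bar>z $ i\<bar> powr q) = 1" if "pn q z = 1" for z :: "real^'n"
  proof -
    have "(\<Sum>i\<in>UNIV. \<bar>z $ i\<bar> powr q) = ((\<Sum>i\<in>UNIV. \<bar>z $ i\<bar> powr q) powr (1/q)) powr q"
      using q by (simp add: powr_powr sum_nonneg)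
    also have "\<dots> = 1" using that unfolding pn_def by simp
    finally show ?thesis .
  qed
  have a1: "(\<Sum>i\<in>UNIV. \<bar>a $ i\<bar> powr q) = 1"
  proof (rule sum1)
    show "pn q a = 1" unfolding a_def using pn_homog[OF q, of "1/s" x] s unfolding s_def by simp
  qed
  have b1: "(\<Sum>i\<in>UNIV. \<bar>b $ i\<bar> powr q) = 1"
  proof (rule sum1)
    show "pn q b = 1" unfolding b_def using pn_homog[OF q, of "1/t" y] t unfolding t_def by simp
  qed
  define l where "l = s / (s + t)"
  define m where "m = t / (s + t)"
  have lm: "0 \<le> l" "0 \<le> m" "l + m = 1" using s t unfolding l_def m_def by (auto simp: add_divide_distrib[symmetric])
  have eq: "(1/(s+t)) *s (x + y) = l *s a + m *s b"
    using s t unfolding l_def m_def a_def b_def by (simp add: vec_eq_iff field_simps)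
  have "(\<Sum>i\<in>UNIV. \<bar>(l *s a + m *s b) $ i\<bar> powr q)
      \<le> (\<Sum>i\<in>UNIV. l * \<bar>a $ i\<bar> powr q + m * \<bar>b $ i\<bar> powr q)"
  proof (rule sum_mono)
    fix i
    have "\<bar>(l *s a + m *s b) $ i\<bar> powr q \<le> (l * \<bar>a $ i\<bar> + m * \<bar>b $ i\<bar>) powr q"
      using lm q by (intro powr_mono2) (auto simp: abs_mult intro!: abs_triangle_ineq[THEN order_trans])
    also have "\<dots> \<le> l * \<bar>a $ i\<bar> powr q + m * \<bar>b $ i\<bar> powr q"
      using lm q by (intro powr_cvx) auto
    finally show "\<bar>(l *s a + m *s b) $ i\<bar> powr q \<le> l * \<bar>a $ i\<bar> powr q + m * \<bar>b $ i\<bar> powr q" .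
  qed
  also have "\<dots> = 1" using a1 b1 lm by (simp add: sum.distrib flip: sum_distrib_left)
  finally have "pn q (l *s a + m *s b) \<le> 1 powr (1/q)" unfolding pn_def using q
    by (intro powr_mono2) (auto intro: sum_nonneg)
  then have "pn q (l *s a + m *s b) \<le> 1" by simp
  then have "(1/(s+t)) * pn q (x + y) \<le> 1" using eq pn_homog[OF q, of "1/(s+t)" "x+y"] s t by simp
  then show ?thesis using s t unfolding s_def t_def by (simp add: field_simps)
qed

lemma pn_upper: assumes q: "1 \<le> q" shows "pn q (x::real^'n) \<le> real CARD('n) * norm x"
proof -
  have "(\<Sum>i\<in>UNIV. \<bar>x $ i\<bar> powr q) \<le> (\<Sum>i\<in>(UNIV::'n set). norm x powr q)"
    using q by (intro sum_mono powr_mono2) (auto simp: component_le_norm_cart)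
  also have "\<dots> = real CARD('n) * norm x powr q" by simp
  finally have "pn q x \<le> (real CARD('n) * norm x powr q) powr (1/q)"
    unfolding pn_def using q by (intro powr_mono2) (auto intro: sum_nonneg)
  also have "\<dots> = real CARD('n) powr (1/q) * norm x"
    using q by (simp add: powr_mult powr_powr)
  also have "\<dots> \<le> real CARD('n) * norm x"
  proof (rule mult_right_mono)
    have c1: "1 \<le> real CARD('n)" by simp
    have "real CARD('n) powr (1/q) \<le> real CARD('n) powr 1"
      using q c1 by (intro powr_mono) auto
    then show "real CARD('n) powr (1/q) \<le> real CARD('n)" by simp
  qed simp
  finally show ?thesis .
qed

definition mx :: "real^'n \<Rightarrow> real" where
  "mx x = Max (range (\<lambda>i. \<bar>x $ i\<bar>))"

lemma mx_comp: "\<bar>x $ i\<bar> \<le> mx x" unfolding mx_def by (rule Max_ge) auto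

lemma mx_le: "(\<And>i. \<bar>x $ i\<bar> \<le> c) \<Longrightarrow> mx x \<le> c" unfolding mx_def
  by (subst Max_le_iff) auto

lemma mx_triangle: "mx (x + y) \<le> mx x + mx y"
  by (rule mx_le) (smt (verit) mx_comp vector_add_component)

lemma mx_upper: "mx (x::real^'n) \<le> real CARD('n) * norm x"
proof -
  have "mx x \<le> norm x" by (rule mx_le) (simp add: component_le_norm_cart)
  also have "\<dots> = 1 * norm x" by simp
  also have "\<dots> \<le> real CARD('n) * norm x" by (rule mult_right_mono) auto
  finally show ?thesis .
qed

lemma vp_cases:
  assumes "1 \<le> p"
  shows "(p = \<infinity> \<and> vpnorm p = mx) \<or> (p \<noteq> \<infinity> \<and> 1 \<le> real_of_ereal p \<and> vpnorm p = pn (real_of_ereal p))"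
proof (cases "p = \<infinity>")
  case True then show ?thesis by (simp add: vpnorm_def mx_def fun_eq_iff)
next
  case False
  with assms have "1 \<le> real_of_ereal p"
    by (cases p) auto
  with False show ?thesis by (simp add: vpnorm_def pn_def fun_eq_iff)
qed

lemma vp_comp: "1 \<le> p \<Longrightarrow> \<bar>x $ i\<bar> \<le> vpnorm p x"
  using vp_cases[of p] mx_comp pn_comp by metis

lemma vp_nonneg: "1 \<le> p \<Longrightarrow> 0 \<le> vpnorm p x"
  using vp_comp[of p x] abs_ge_zero order_trans by metis

lemma vp_zero_iff: "1 \<le> p \<Longrightarrow> vpnorm p x = 0 \<longleftrightarrow> x = 0"
proof
  assume "1 \<le> p" "vpnorm p x = 0"
  then have "\<bar>x $ i\<bar> \<le> 0" for i using vp_comp[of p x i] by simp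
  then show "x = 0" by (simp add: vec_eq_iff)
next
  assume "1 \<le> p" "x = 0"
  moreover have "mx x = 0" using \<open>x = 0\<close> by (simp add: mx_def)
  moreover have "pn q x = 0" for q using \<open>x = 0\<close> by (simp add: pn_def)
  ultimately show "vpnorm p x = 0" using vp_cases[of p] by metis
qed

lemma vp_mono: "1 \<le> p \<Longrightarrow> (\<And>i. \<bar>x $ i\<bar> \<le> \<bar>y $ i\<bar>) \<Longrightarrow> vpnorm p x \<le> vpnorm p y"
  using vp_cases[of p] pn_mono[of "real_of_ereal p" x y]
  by (metis mx_comp mx_le order_trans)

lemma vp_triangle: "1 \<le> p \<Longrightarrow> vpnorm p (x + y) \<le> vpnorm p x + vpnorm p y"
  using vp_cases[of p] pn_triangle[of "real_of_ereal p" x y] mx_triangle[of x y] by metis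

lemma vp_upper: "1 \<le> p \<Longrightarrow> vpnorm p (x::real^'n) \<le> real CARD('n) * norm x"
  using vp_cases[of p] pn_upper[of "real_of_ereal p" x] mx_upper[of x] by metis

lemma vp_lower: assumes "1 \<le> p" shows "norm (x::real^'n) \<le> real CARD('n) * vpnorm p x"
proof -
  have "norm x \<le> (\<Sum>i\<in>UNIV. \<bar>x $ i\<bar>)" by (rule norm_le_l1_cart)
  also have "\<dots> \<le> (\<Sum>i\<in>(UNIV::'n set). vpnorm p x)" by (intro sum_mono vp_comp assms)
  finally show ?thesis by simp
qed


lemma op_props:
  fixes M :: "real^'n^'m"
  assumes p: "1 \<le> p"
  shows "vpnorm p (M *v x) \<le> opnorm_p p M * vpnorm p x" and "0 \<le> opnorm_p p M"
proof -
  let ?S = "{vpnorm p (M *v x) / vpnorm p x | x. x \<noteq> 0}"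
  define K where "K = onorm ((*v) M)"
  have K: "0 \<le> K" unfolding K_def by (intro onorm_pos_le) simp
  have bnd: "v \<le> real CARD('m) * K * real CARD('n)" if "v \<in> ?S" for v
  proof -
    obtain y where y: "y \<noteq> 0" "v = vpnorm p (M *v y) / vpnorm p y" using \<open>v \<in> ?S\<close> by blast
    have pos: "0 < vpnorm p y" using y vp_zero_iff[OF p] vp_nonneg[OF p] by (metis less_eq_real_def)
    have "vpnorm p (M *v y) \<le> real CARD('m) * norm (M *v y)" by (rule vp_upper[OF p])
    also have "\<dots> \<le> real CARD('m) * (K * norm y)"
      unfolding K_def by (intro mult_left_mono onorm) auto
    also have "\<dots> \<le> real CARD('m) * (K * (real CARD('n) * vpnorm p y))"
      using K by (intro mult_left_mono vp_lower[OF p]) auto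
    finally show ?thesis using y pos by (simp add: divide_le_eq mult_ac)
  qed
  then have bdd: "bdd_above ?S" by (meson bdd_aboveI)
  define e :: "real^'n" where "e = axis undefined 1"
  have "e \<noteq> 0" unfolding e_def by (simp add: axis_eq_0_iff)
  then have ne: "vpnorm p (M *v e) / vpnorm p e \<in> ?S" by blast
  show "0 \<le> opnorm_p p M" unfolding opnorm_p_def
    by (rule cSup_upper2[OF ne _ bdd]) (simp add: vp_nonneg[OF p])
  show "vpnorm p (M *v x) \<le> opnorm_p p M * vpnorm p x"
  proof (cases "x = 0")
    case True
    have "vpnorm p (0::real^'m) = 0" "vpnorm p (0::real^'n) = 0" using vp_zero_iff[OF p] by blast+
    then show ?thesis using True by simp
  next
    case False
    have pos: "0 < vpnorm p x" using False vp_zero_iff[OF p] vp_nonneg[OF p] by (metis less_eq_real_def)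
    have "vpnorm p (M *v x) / vpnorm p x \<le> opnorm_p p M" unfolding opnorm_p_def
      by (rule cSup_upper[OF _ bdd]) (use False in blast)
    then show ?thesis using pos by (simp add: divide_le_eq)
  qed
qed

theorem theorem3p1:
  fixes A B MA NA :: "real^'n^'m" and p :: ereal and b :: "real^'m"
  assumes "CARD('m) < CARD('n)"
    and "1 \<le> p"
    and "A = MA - NA"
    and "rank MA = CARD('m)"
    and "opnorm_p p (pinv MA ** NA) + opnorm_p p (pinv MA ** B) < 1"
  shows "(\<exists>!x. x = pinv MA *v (NA *v x + B *v vabs x + b)) \<and>
         (\<forall>x. x = pinv MA *v (NA *v x + B *v vabs x + b) \<longrightarrow> A *v x - B *v vabs x = b)"
proof
  note p = assms(2)
  define T where "T x = pinv MA *v (NA *v x + B *v vabs x + b)" for x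
  define c where "c = opnorm_p p (pinv MA ** NA) + opnorm_p p (pinv MA ** B)"
  have c0: "0 \<le> c" and c1: "c < 1" using op_props(2)[OF p] assms(5) unfolding c_def by (auto intro: add_nonneg_nonneg)
  have contr: "vpnorm p (T x - T y) \<le> c * vpnorm p (x - y)" for x y
  proof -
    have eq: "T x - T y = (pinv MA ** NA) *v (x - y) + (pinv MA ** B) *v (vabs x - vabs y)"
      unfolding T_def by (simp add: matrix_vector_mul_assoc algebra_simps)
    have "vpnorm p (T x - T y) \<le> vpnorm p ((pinv MA ** NA) *v (x - y)) + vpnorm p ((pinv MA ** B) *v (vabs x - vabs y))"
      unfolding eq by (rule vp_triangle[OF p])
    also have "\<dots> \<le> opnorm_p p (pinv MA ** NA) * vpnorm p (x - y) + opnorm_p p (pinv MA ** B) * vpnorm p (vabs x - vabs y)"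
      by (intro add_mono op_props(1)[OF p])
    also have "\<dots> \<le> opnorm_p p (pinv MA ** NA) * vpnorm p (x - y) + opnorm_p p (pinv MA ** B) * vpnorm p (x - y)"
      by (intro add_mono mult_left_mono op_props(2)[OF p] vp_mono[OF p]) (auto simp: vabs_def)
    finally show ?thesis unfolding c_def by (simp add: algebra_simps)
  qed
  have uniq: "x = y" if "T x = x" "T y = y" for x y
  proof -
    have "vpnorm p (x - y) \<le> c * vpnorm p (x - y)" using contr[of x y] that by simp
    then have "vpnorm p (x - y) \<le> 0" using c1 vp_nonneg[OF p, of "x - y"]
      by (metis mult_le_cancel_right1 not_le)
    then have "vpnorm p (x - y) = 0" using vp_nonneg[OF p, of "x - y"] by simp
    then have "x - y = 0" using vp_zero_iff[OF p, of "x - y"] by blast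
    then show ?thesis by simp
  qed
  have iter: "vpnorm p ((T ^^ k) x - (T ^^ k) y) \<le> c ^ k * vpnorm p (x - y)" for k x y
  proof (induction k)
    case 0 then show ?case by simp
  next
    case (Suc k)
    have "vpnorm p ((T ^^ Suc k) x - (T ^^ Suc k) y) \<le> c * vpnorm p ((T ^^ k) x - (T ^^ k) y)"
      using contr by simp
    also have "\<dots> \<le> c * (c ^ k * vpnorm p (x - y))" using Suc c0 by (intro mult_left_mono)
    finally show ?case by (simp add: mult_ac)
  qed
  define C where "C = real CARD('n) * real CARD('n)"
  have Cpos: "0 < C" unfolding C_def by simp
  obtain k where k: "c ^ k < 1 / (2 * C)" using real_arch_pow_inv[OF _ c1, of "1/(2*C)"] Cpos by auto
  have lip: "dist ((T ^^ k) x) ((T ^^ k) y) \<le> (1/2) * dist x y" for x y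
  proof -
    have "dist ((T ^^ k) x) ((T ^^ k) y) \<le> real CARD('n) * vpnorm p ((T ^^ k) x - (T ^^ k) y)"
      unfolding dist_norm by (rule vp_lower[OF p])
    also have "\<dots> \<le> real CARD('n) * (c ^ k * vpnorm p (x - y))" by (intro mult_left_mono iter) auto
    also have "\<dots> \<le> real CARD('n) * (c ^ k * (real CARD('n) * dist x y))"
      unfolding dist_norm using c0 by (intro mult_left_mono vp_upper[OF p]) auto
    also have "\<dots> = (C * c ^ k) * dist x y" unfolding C_def by (simp add: mult_ac)
    also have "\<dots> \<le> (1/2) * dist x y"
    proof (rule mult_right_mono)
      show "C * c ^ k \<le> 1/2" using k Cpos by (simp add: field_simps)
    qed simp
    finally show ?thesis .
  qed
  obtain z where z: "(T ^^ k) z = z" using banach_fix_type[of "1/2" "T ^^ k"] lip by auto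
  have "(T ^^ k) (T z) = T z" using z by (metis funpow_swap1)
  have Tz: "T z = z"
    using banach_fix_type[of "1/2" "T ^^ k"] lip z \<open>(T ^^ k) (T z) = T z\<close> by auto
  show "\<exists>!x. x = pinv MA *v (NA *v x + B *v vabs x + b)"
  proof (rule ex1I[of _ z])
    show "z = pinv MA *v (NA *v z + B *v vabs z + b)" using Tz unfolding T_def by simp
    fix y assume "y = pinv MA *v (NA *v y + B *v vabs y + b)"
    then have "T y = y" unfolding T_def by simp
    then show "y = z" using uniq Tz by blast
  qed
  show "\<forall>x. x = pinv MA *v (NA *v x + B *v vabs x + b) \<longrightarrow> A *v x - B *v vabs x = b"
  proof (intro allI impI)
    fix x assume hx: "x = pinv MA *v (NA *v x + B *v vabs x + b)"
    have "MA *v x = (MA ** pinv MA) *v (NA *v x + B *v vabs x + b)"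
      by (subst hx) (simp add: matrix_vector_mul_assoc)
    also have "\<dots> = NA *v x + B *v vabs x + b" using pinv_right[OF assms(4)] by simp
    moreover have "A *v x = MA *v x - NA *v x" using assms(3) by (simp add: matrix_vector_mult_diff_rdistrib)
    ultimately show "A *v x - B *v vabs x = b" by simp
  qed
qed

end
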